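(* $\displaystyle\int_{\alpha}^{\infty}\left[u - \cosh^{-1}(\sinh u)\right]\,du = \frac{\pi^2}{16} - \frac12\ln^2\!\left(1+\sqrt{2}\right)$, where $\alpha = \sinh^{-1}(1) = \ln(1+\sqrt{2})$.
   Context: $\sinh^{-1}x = \ln\!\left(x+\sqrt{x^2+1}\right)$ for all real $x$, and $\cosh^{-1}x := \ln\!\left(x+\sqrt{x^2-1}\right)$ for real $x \ge 1$ (the inverse of $\cosh$ restricted to $[0,\infty)$). *)

theory Defs
  imports "HOL-Analysis.Analysis"
begin

end

theory Submission
  imports Defs "HOL-Real_Asymp.Real_Asymp"
begin


definition atc :: "nat \<Rightarrow> real" where "atc n = (if even n then 0 else 1 / real n)"

lemma even_geom_sums:
  fixes x :: real assumes "\<bar>x\<bar> < 1"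
  shows "(\<lambda>n. (if even n then 1 else 0) * x^n) sums (1/(1-x^2))"
proof -
  have g: "(\<lambda>k. (x^2)^k) sums (1/(1-x^2))"
    by (rule geometric_sums) (use assms in \<open>simp add: abs_square_less_1\<close>)
  have z: "(\<lambda>k::nat. 0::real) sums 0" by simp
  have "(\<lambda>n. if even n then (x^2)^(n div 2) else 0) sums (0 + 1/(1-x^2))"
    using sums_if[OF z g] by simp
  moreover have "(\<lambda>n. if even n then (x^2)^(n div 2) else 0) = (\<lambda>n. (if even n then 1 else 0) * x^n)"
    by (auto simp: fun_eq_iff simp flip: power_mult)
  ultimately show ?thesis by simp
qed

lemma diffs_atc: "diffs atc n = (if even n then 1 else 0)"
  by (simp add: diffs_def atc_def)

lemma atc_summable: fixes x :: real assumes "\<bar>x\<bar> < 1" shows "summable (\<lambda>n. atc n * x^n)"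
proof (rule summable_comparison_test)
  have "norm (atc n * x ^ n) \<le> \<bar>x\<bar>^n" for n
  proof (cases "even n")
    case False
    then have n: "n \<ge> 1" by (cases n) auto
    then have "1 / real n \<le> 1" "0 \<le> 1 / real n" by auto
    then have "1 / real n * \<bar>x\<bar>^n \<le> \<bar>x\<bar>^n"
      by (intro mult_left_le_one_le) auto
    then show ?thesis using False by (simp add: atc_def abs_mult power_abs)
  qed (simp add: atc_def)
  then show "\<exists>N. \<forall>n\<ge>N. norm (atc n * x ^ n) \<le> \<bar>x\<bar>^n" by blast
  show "summable (\<lambda>n. \<bar>x\<bar>^n)" using assms by simp
qed

lemma artanh_series: fixes x :: real assumes "\<bar>x\<bar> < 1"
  shows "(\<lambda>n. atc n * x^n) sums artanh x"
proof -
  define T where "T = (\<lambda>x::real. \<Sum>n. atc n * x^n)"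
  have D: "((\<lambda>y. T y - artanh y) has_field_derivative 0) (at y)" if "y \<in> {-1<..<1}" for y
  proof -
    have y: "\<bar>y\<bar> < 1" using that by auto
    have "(T has_field_derivative (\<Sum>n. diffs atc n * y^n)) (at y)"
      unfolding T_def by (rule termdiffs_strong'[of 1]) (use atc_summable y in auto)
    moreover have "(\<Sum>n. diffs atc n * y^n) = 1/(1-y^2)"
      using even_geom_sums[OF y] by (simp add: diffs_atc sums_iff)
    ultimately show ?thesis
      using y by (auto intro!: derivative_eq_intros)
  qed
  have "T x - artanh x = T 0 - artanh 0"
    by (rule DERIV_isconst3[of "-1" 1]) (use assms D in auto)
  moreover have "T 0 = 0" unfolding T_def by (simp add: atc_def)
  ultimately have "T x = artanh x" by simp
  with atc_summable[OF assms] show ?thesis unfolding T_def by (simp add: sums_iff)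
qed



definition chc :: "nat \<Rightarrow> real" where "chc n = (if even n then 0 else 1 / (real n)^2)"
definition chi2 :: "real \<Rightarrow> real" where "chi2 x = (\<Sum>n. chc n * x^n)"

lemma chc_sums: "chc sums (pi^2/8)"
proof -
  have a: "(\<lambda>n. 1 / (real n)^2) sums (pi^2/6)"
    using inverse_squares_sums sums_Suc_iff[of "\<lambda>n. 1 / (real n)^2" "pi^2/6"] by simp
  have f: "(\<lambda>k. 1/4 * (1 / (real k)^2)) sums (1/4 * (pi^2/6))"
    by (rule sums_mult[OF a])
  have z: "(\<lambda>k::nat. 0::real) sums 0" by simp
  have "(\<lambda>n. if even n then 1/4 * (1 / (real (n div 2))^2) else 0) sums (0 + 1/4 * (pi^2/6))"
    using sums_if[OF z f] by simp
  moreover have "(\<lambda>n. if even n then 1/4 * (1 / (real (n div 2))^2) else 0) = (\<lambda>n. if even n then 1 / (real n)^2 else 0)"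
    by (auto simp: fun_eq_iff elim!: evenE simp: power2_eq_square)
  ultimately have e: "(\<lambda>n. if even n then 1 / (real n)^2 else 0) sums (pi^2/24)" by simp
  have "(\<lambda>n. 1 / (real n)^2 - (if even n then 1 / (real n)^2 else 0)) sums (pi^2/6 - pi^2/24)"
    by (rule sums_diff[OF a e])
  moreover have "(\<lambda>n. 1 / (real n)^2 - (if even n then 1 / (real n)^2 else 0)) = chc"
    by (auto simp: fun_eq_iff chc_def)
  ultimately show ?thesis by simp
qed

lemma chc_nonneg: "chc n \<ge> 0" by (simp add: chc_def)

lemma chc_bound: "\<bar>x\<bar> \<le> 1 \<Longrightarrow> norm (chc n * x^n) \<le> chc n"
proof -
  assume x: "\<bar>x\<bar> \<le> 1"
  have "\<bar>x\<bar>^n \<le> 1" using x by (simp add: power_le_one)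
  then have "chc n * \<bar>x\<bar>^n \<le> chc n * 1" using chc_nonneg[of n] by (intro mult_left_mono) auto
  then show ?thesis using chc_nonneg[of n] by (simp add: abs_mult power_abs)
qed

lemma chc_summable: "\<bar>x\<bar> \<le> 1 \<Longrightarrow> summable (\<lambda>n. chc n * x^n)"
  by (rule summable_comparison_test[OF _ sums_summable[OF chc_sums]]) (use chc_bound in blast)

lemma chi2_1: "chi2 1 = pi^2/8"
  using chc_sums by (simp add: chi2_def sums_iff)

lemma chi2_0: "chi2 0 = 0"
  by (simp add: chi2_def chc_def)

lemma chi2_cont: "continuous_on {-1..1} chi2"
proof (rule uniform_limit_theorem; (intro always_eventually allI)?)
  show "uniform_limit {-1..1} (\<lambda>n x. \<Sum>k<n. chc k * x^k) chi2 sequentially"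
    unfolding chi2_def
    by (rule Weierstrass_m_test[OF _ sums_summable[OF chc_sums]]) (use chc_bound in \<open>auto simp: abs_le_iff\<close>)
qed (auto intro!: continuous_intros)

lemma diffs_chc: "diffs chc n = atc (Suc n)"
  by (simp add: diffs_def chc_def atc_def power2_eq_square)

lemma chi2_deriv:
  fixes x :: real assumes "0 < x" "x < 1"
  shows "(chi2 has_field_derivative (artanh x / x)) (at x)"
proof -
  have x: "\<bar>x\<bar> < 1" using assms by auto
  have d: "(chi2 has_field_derivative (\<Sum>n. diffs chc n * x^n)) (at x)"
    unfolding chi2_def[abs_def] by (rule termdiffs_strong'[of 1]) (use chc_summable x in auto)
  have s: "summable (\<lambda>n. diffs chc n * x^n)"
    by (rule termdiff_converges[of x 1]) (use chc_summable x in auto)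
  have "(\<lambda>n. x * (diffs chc n * x^n)) sums (x * (\<Sum>n. diffs chc n * x^n))"
    by (rule sums_mult[OF summable_sums[OF s]])
  moreover have "(\<lambda>n. x * (diffs chc n * x^n)) = (\<lambda>n. atc (Suc n) * x^(Suc n))"
    by (auto simp: fun_eq_iff diffs_chc)
  ultimately have "(\<lambda>n. atc (Suc n) * x^(Suc n)) sums (x * (\<Sum>n. diffs chc n * x^n))" by simp
  then have "(\<lambda>n. atc n * x^n) sums (x * (\<Sum>n. diffs chc n * x^n))"
    by (subst (asm) sums_Suc_iff) (simp add: atc_def)
  with artanh_series[OF x] have "x * (\<Sum>n. diffs chc n * x^n) = artanh x"
    using sums_unique2 by blast
  then have "(\<Sum>n. diffs chc n * x^n) = artanh x / x" using assms by (simp add: field_simps)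
  with d show ?thesis by simp
qed



lemma artanh_dual: fixes x :: real assumes "0 < x" "x < 1"
  shows "artanh ((1-x)/(1+x)) = - ln x / 2"
proof -
  have p: "1 + x > 0" "x \<noteq> 0" using assms by auto
  have a: "1 + (1-x)/(1+x) = 2/(1+x)" using p by (simp add: field_simps)
  have b: "1 - (1-x)/(1+x) = 2*x/(1+x)" using p by (simp add: field_simps)
  have "(1 + (1-x)/(1+x)) / (1 - (1-x)/(1+x)) = 1/x" unfolding a b
  proof -
    have q: "x * 2 + x * (x * 2) > 0" using assms by (simp add: add_pos_pos)
    show "2 / (1 + x) / (2 * x / (1 + x)) = 1 / x" using p q by (simp add: field_simps)
  qed
  then show ?thesis by (simp add: artanh_def ln_div assms)
qed

lemma landen_deriv: fixes x :: real assumes x: "0 < x" "x < 1"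
  shows "((\<lambda>x. chi2 x + chi2 ((1-x)/(1+x)) - ln x * artanh x) has_field_derivative 0) (at x)"
proof -
  define y where "y = (1-x)/(1+x)"
  have y: "0 < y" "y < 1" using x by (auto simp: y_def field_simps)
  have dy: "((\<lambda>x. (1-x)/(1+x)) has_field_derivative (-2/(1+x)^2)) (at x)"
    using x by (auto intro!: derivative_eq_intros simp: field_simps power2_eq_square)
  have d2: "((\<lambda>x. chi2 ((1-x)/(1+x))) has_field_derivative (artanh y / y * (-2/(1+x)^2))) (at x)"
    using DERIV_chain2[OF chi2_deriv[OF y, unfolded y_def] dy] by (simp add: y_def)
  have d: "((\<lambda>x. chi2 x + chi2 ((1-x)/(1+x)) - ln x * artanh x) has_field_derivative
      (artanh x / x + artanh y / y * (-2/(1+x)^2) - (1/x * artanh x + ln x * (1/(1-x^2))))) (at x)"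
    using x by (auto intro!: derivative_eq_intros chi2_deriv d2)
  have "artanh y / y * (-2/(1+x)^2) = ln x * (1/(1-x^2))"
  proof -
    have n: "1 - x \<noteq> 0" "1 + x \<noteq> 0" "x \<noteq> 0" "1 - x^2 \<noteq> 0" using x abs_square_less_1[of x] by auto
    have e: "1 - x^2 = (1-x)*(1+x)" by (simp add: power2_eq_square algebra_simps)
    have "(- ln x / 2) / ((1-x)/(1+x)) * (-2/(1+x)^2) = ln x / ((1-x)*(1+x))"
    proof -
      have g: "\<And>a b l::real. a \<noteq> 0 \<Longrightarrow> b \<noteq> 0 \<Longrightarrow> (- l/2)/(a/b) * (-2/b^2) = l/(a*b)"
        by (simp add: field_simps power2_eq_square)
      show ?thesis using g[OF n(1) n(2)] .
    qed
    moreover have "ln x * (1/(1-x^2)) = ln x / ((1-x)*(1+x))" by (simp add: e)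
    ultimately show ?thesis unfolding y_def artanh_dual[OF x] by (simp only:)
  qed
  with d show ?thesis by simp
qed

lemma chi2_landen: "chi2 (sqrt 2 - 1) = pi^2/16 - (ln (1 + sqrt 2))^2 / 4"
proof -
  define L where "L = (\<lambda>x::real. chi2 x + chi2 ((1-x)/(1+x)) - ln x * artanh x)"
  define c where "c = sqrt 2 - 1"
  have c: "0 < c" "c < 1" unfolding c_def
    using sqrt2_less_2 by (auto simp: less_diff_eq)
  have const: "L x = L c" if "x \<in> {0<..<1}" for x
    by (rule DERIV_isconst3[of 0 1]) (use that c landen_deriv in \<open>auto simp: L_def\<close>)
  have ev: "eventually (\<lambda>x. L x = L c) (at_left (1::real))"
  proof -
    have "eventually (\<lambda>x. x \<in> {0<..<1}) (at_left (1::real))" by (rule eventually_at_left_real) simp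
    then show ?thesis by (rule eventually_mono) (use const in auto)
  qed
  have t1: "(chi2 \<longlongrightarrow> chi2 1) (at_left 1)"
    by (rule continuous_on_Icc_at_leftD[OF chi2_cont]) simp
  have ic: "isCont chi2 0"
    by (rule continuous_on_interior[OF chi2_cont]) simp
  have t2: "((\<lambda>x. chi2 ((1-x)/(1+x))) \<longlongrightarrow> chi2 0) (at_left (1::real))"
    by (rule isCont_tendsto_compose[OF ic]) real_asymp
  have t3: "((\<lambda>x. ln x * artanh x) \<longlongrightarrow> 0) (at_left (1::real))"
    unfolding artanh_def by real_asymp
  have "(L \<longlongrightarrow> chi2 1 + chi2 0 - 0) (at_left 1)"
    unfolding L_def by (intro tendsto_intros t1 t2 t3)
  then have "(L \<longlongrightarrow> pi^2/8) (at_left 1)" by (simp add: chi2_1 chi2_0)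
  moreover have "(L \<longlongrightarrow> L c) (at_left 1)"
    by (rule Lim_transform_eventually[OF tendsto_const]) (use ev in \<open>auto elim: eventually_mono\<close>)
  ultimately have Lc: "L c = pi^2/8"
    using tendsto_unique[OF trivial_limit_at_left_real] by blast
  have s2: "sqrt 2 * sqrt 2 = (2::real)" by simp
  have pr: "(sqrt 2 - 1) * (1 + sqrt 2) = 1" by (simp add: algebra_simps)
  have cinv: "c = 1 / (1 + sqrt 2)" unfolding c_def using pr
    by (simp add: eq_divide_eq add_pos_pos) (smt (verit) real_sqrt_ge_zero)
  have cd: "(1-c)/(1+c) = c" unfolding c_def by (simp add: field_simps s2)
  have lnc: "ln c = - ln (1 + sqrt 2)" unfolding cinv by (simp add: ln_div add_pos_pos)
  have "(1+c)/(1-c) = 1 + sqrt 2" using c unfolding c_def by (simp add: field_simps s2)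
  then have atc: "artanh c = ln (1 + sqrt 2) / 2" by (simp add: artanh_def)
  have "L c = 2 * chi2 c + (ln (1 + sqrt 2))^2 / 2"
    unfolding L_def cd lnc atc by (simp add: power2_eq_square)
  with Lc show ?thesis unfolding c_def by simp
qed



lemma key_alg:
  fixes s c r :: real
  assumes "c^2 = s^2 + 1" "r^2 = s^2 - 1"
  shows "(1 + (c - s) * (s - r)) * (s+r) = (1 - (c - s) * (s - r)) * (s+c)"
  using assms by algebra

lemma tdef_eq: "exp (-u) * (sinh u - sqrt ((sinh u)^2 - 1)) = (cosh u - sinh u) * (sinh u - sqrt ((sinh u)^2 - 1))"
  by (simp add: cosh_minus_sinh)

lemma artanh_t:
  fixes u :: real assumes u: "sinh u \<ge> 1"
  defines "t \<equiv> exp (-u) * (sinh u - sqrt ((sinh u)^2 - 1))"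
  shows "artanh t = (u - arcosh (sinh u)) / 2" "0 < t" "t < 1"
proof -
  define s where "s = sinh u"
  define c where "c = cosh u"
  define r where "r = sqrt (s^2 - 1)"
  have r0: "r \<ge> 0" "r^2 = s^2 - 1" using u by (auto simp: r_def s_def)
  have cs: "c^2 = s^2 + 1" by (simp add: c_def s_def cosh_square_eq)
  have rs: "r < s"
  proof -
    have "r^2 < s^2" using r0 by simp
    then show ?thesis using r0 u s_def by (smt (verit) power_mono)
  qed
  have sc: "s < c" "s + c = exp u" "c - s = exp (-u)"
    unfolding s_def c_def using sinh_less_cosh_real[of u] sinh_plus_cosh[of u] cosh_minus_sinh[of u]
    by linarith+
  have t: "t = (c - s) * (s - r)" unfolding t_def sc(3)[symmetric] s_def r_def ..
  have tp: "0 < t" unfolding t using sc rs by simp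
  have "(c - s) * (s - r) \<le> (c - s) * s" using r0 sc by (intro mult_left_mono) auto
  also have "(c - s) * s < (c - s) * c" using sc by (intro mult_strict_left_mono) auto
  also have "(c - s) * c \<le> (c - s) * (c + s)" proof -
    have s0: "0 \<le> s" using u unfolding s_def by linarith
    show ?thesis using sc s0 by (intro mult_left_mono) linarith+
  qed
  also have "(c - s) * (c + s) = 1" using cs by (simp add: algebra_simps power2_eq_square)
  finally have t1: "t < 1" unfolding t .
  have k: "(1 + t) * (s + r) = (1 - t) * (s + c)" unfolding t by (rule key_alg[OF cs r0(2)])
  have sr: "s + r > 0" using rs r0 by simp
  have "(1 + t) / (1 - t) = (s + c) / (s + r)"
    using k t1 sr by (simp add: frac_eq_eq mult.commute)
  then have "(1 + t) / (1 - t) = exp u / (s + r)" using sc(2) by simp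
  then have "ln ((1 + t) / (1 - t)) = u - ln (s + r)"
    using sr by (simp add: ln_div)
  moreover have "arcosh (sinh u) = ln (s + r)" using u by (simp add: arcosh_real_def s_def r_def)
  ultimately show "artanh t = (u - arcosh (sinh u)) / 2" by (simp add: artanh_def)
  show "0 < t" "t < 1" using tp t1 by auto
qed



lemma F_deriv:
  fixes u :: real assumes u: "sinh u > 1"
  shows "((\<lambda>u. (u - arcosh (sinh u))^2 / 4 - chi2 (exp (-u) * (sinh u - sqrt ((sinh u)^2 - 1))))
          has_real_derivative (u - arcosh (sinh u))) (at u)"
proof -
  define s where "s = sinh u"
  define c where "c = cosh u"
  define r where "r = sqrt (s^2 - 1)"
  define T where "T = exp (-u) * (sinh u - sqrt ((sinh u)^2 - 1))"
  define f where "f = u - arcosh (sinh u)"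
  have r0: "r > 0" using u by (simp add: r_def s_def)
  have df: "((\<lambda>u. u - arcosh (sinh u)) has_real_derivative (1 - c / r)) (at u)"
  proof -
    have a: "((\<lambda>z. arcosh (sinh z)) has_real_derivative (1 / sqrt ((sinh u)^2 - 1)) * cosh u) (at u)"
      by (rule DERIV_chain2[where g=sinh, OF arcosh_real_has_field_derivative[OF u]])
         (auto intro!: derivative_eq_intros)
    have "((\<lambda>u. u - arcosh (sinh u)) has_real_derivative (1 - (1 / sqrt ((sinh u)^2 - 1)) * cosh u)) (at u)"
      by (intro derivative_intros a)
    then show ?thesis by (simp add: c_def r_def s_def)
  qed
  have dT: "((\<lambda>u. exp (-u) * (sinh u - sqrt ((sinh u)^2 - 1))) has_real_derivative (- T * (r + c) / r)) (at u)"
  proof -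
    have s2: "(sinh u)^2 > 1" using u by (simp add: one_less_power)
    have R: "sqrt ((sinh u)^2 - 1) > 0" using s2 by simp
    show ?thesis
      using s2 R unfolding c_def r_def s_def T_def
      apply (auto intro!: derivative_eq_intros)
      apply (simp add: field_simps inverse_eq_divide)
      done
  qed
  have Tb: "0 < T" "T < 1" "artanh T = f / 2" using artanh_t[of u] u by (auto simp: T_def f_def)
  have dc: "((\<lambda>u. chi2 (exp (-u) * (sinh u - sqrt ((sinh u)^2 - 1)))) has_real_derivative
             (artanh T / T * (- T * (r + c) / r))) (at u)"
    using DERIV_chain2[OF chi2_deriv[OF Tb(1,2), unfolded T_def] dT] by (simp add: T_def)
  have d: "((\<lambda>u. (u - arcosh (sinh u))^2 / 4 - chi2 (exp (-u) * (sinh u - sqrt ((sinh u)^2 - 1))))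
          has_real_derivative (of_nat 2 * ((1 - c/r) * f^(2 - Suc 0)) / 4 - artanh T / T * (- T * (r + c) / r))) (at u)"
  proof -
    have dp0: "((\<lambda>z. (z - arcosh (sinh z))^2) has_real_derivative (of_nat 2 * ((1 - c/r) * (u - arcosh (sinh u))^(2 - Suc 0)))) (at u)"
      by (rule DERIV_power[OF df])
    have dp: "((\<lambda>z. (z - arcosh (sinh z))^2 / 4) has_real_derivative (of_nat 2 * ((1 - c/r) * (u - arcosh (sinh u))^(2 - Suc 0))) / 4) (at u)"
      by (rule DERIV_cdivide[OF dp0])
    show ?thesis unfolding f_def by (rule DERIV_diff[OF dp dc])
  qed
  have "of_nat 2 * ((1 - c/r) * f^(2 - Suc 0)) / 4 - artanh T / T * (- T * (r + c) / r) = f"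
    unfolding Tb(3) using Tb(1) r0 by (simp add: field_simps)
  with d show ?thesis by (simp add: f_def)
qed

theorem theorem2:
  shows "((\<lambda>u::real. u - arcosh (sinh u)) has_integral
            (pi\<^sup>2 / 16 - (ln (1 + sqrt 2))\<^sup>2 / 2)) {arsinh 1..}"
proof -
  define a where "a = arsinh (1::real)"
  define T where "T = (\<lambda>u::real. exp (-u) * (sinh u - sqrt ((sinh u)^2 - 1)))"
  define f where "f = (\<lambda>u::real. u - arcosh (sinh u))"
  define F where "F = (\<lambda>u. (f u)^2 / 4 - chi2 (T u))"
  have a_eq: "a = ln (1 + sqrt 2)" unfolding a_def by (simp add: arsinh_real_def add.commute)
  have a_pos: "a > 0" unfolding a_def by simp
  have sa: "sinh a = 1" unfolding a_def by simp
  have s1: "sinh u \<ge> 1" if "u \<ge> a" for u using that sa by (metis sinh_real_le_iff)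
  have s1': "sinh u > 1" if "u > a" for u using that sa by (metis sinh_real_less_iff)
  have Tb: "0 < T u \<and> T u < 1" if "u \<ge> a" for u
    using artanh_t[OF s1[OF that]] by (simp add: T_def)
  have nonneg: "f u \<ge> 0" if "u \<ge> a" for u
  proof -
    have "\<not> arcosh (cosh u) < arcosh (sinh u)"
      using s1[OF that] cosh_real_ge_1[of u] sinh_le_cosh_real[of u] by simp
    moreover have "arcosh (cosh u) = u" using that a_pos by (intro arcosh_cosh_real) simp
    ultimately show ?thesis by (simp add: f_def)
  qed
  have cont: "continuous_on {a..y} F" for y
  proof -
    have cf: "continuous_on {a..y} f" unfolding f_def
      by (intro continuous_intros) (use s1 in auto)
    have cT: "continuous_on {a..y} T" unfolding T_def by (intro continuous_intros)
    have cc: "continuous_on {a..y} (\<lambda>u. chi2 (T u))"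
      by (rule continuous_on_compose2[OF chi2_cont cT]) (use Tb in fastforce)
    show ?thesis unfolding F_def by (intro continuous_intros cf cc) auto
  qed
  have deriv: "(F has_real_derivative f u) (at u)" if "u > a" for u
    using F_deriv[OF s1'[OF that]] by (simp add: F_def f_def T_def)
  have hi: "(f has_integral (F y - F a)) {a..y}" if "y \<ge> a" for y
    by (rule fundamental_theorem_of_calculus_interior[OF that cont])
       (use deriv in \<open>auto simp: has_real_derivative_iff_has_vector_derivative\<close>)
  have int: "f integrable_on {a..y}" for y
  proof (cases "y \<ge> a")
    case True then show ?thesis using hi by blast
  next
    case False then have "{a..y} = {}" by auto
    then show ?thesis by (simp add: integrable_on_empty)
  qed
  have lf: "(f \<longlongrightarrow> 0) at_top"
  proof -
    have "((\<lambda>u::real. u - ln (sinh u + sqrt ((sinh u)^2 - 1))) \<longlongrightarrow> 0) at_top" by real_asymp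
    moreover have "eventually (\<lambda>u. u - ln (sinh u + sqrt ((sinh u)^2 - 1)) = f u) at_top"
      using eventually_ge_at_top[of a] by eventually_elim (use s1 in \<open>simp add: f_def arcosh_real_def\<close>)
    ultimately show ?thesis by (rule Lim_transform_eventually)
  qed
  have lT: "(T \<longlongrightarrow> 0) at_top" unfolding T_def by real_asymp
  have ic: "isCont chi2 0"
    by (rule continuous_on_interior[OF chi2_cont]) simp
  have lF: "(F \<longlongrightarrow> 0) at_top"
  proof -
    have "((\<lambda>u. (f u)^2 / 4 - chi2 (T u)) \<longlongrightarrow> 0^2/4 - chi2 0) at_top"
      by (intro tendsto_intros lf isCont_tendsto_compose[OF ic lT]) auto
    then show ?thesis by (simp add: F_def chi2_0)
  qed
  have lim: "((\<lambda>y. integral {a..y} f) \<longlongrightarrow> 0 - F a) at_top"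
  proof -
    have "((\<lambda>y. F y - F a) \<longlongrightarrow> 0 - F a) at_top" by (intro tendsto_intros lF)
    moreover have "eventually (\<lambda>y. F y - F a = integral {a..y} f) at_top"
      using eventually_ge_at_top[of a] by eventually_elim (use hi integral_unique in metis)
    ultimately show ?thesis by (rule Lim_transform_eventually)
  qed
  have res: "(f has_integral (0 - F a)) {a..}"
    by (rule has_integral_to_inf[OF int lim]) (use nonneg in auto)
  have pr: "(sqrt 2 - 1) * (1 + sqrt 2) = 1" by (simp add: algebra_simps)
  have p2: "1 + sqrt 2 > 0" by (smt (verit) real_sqrt_ge_zero)
  have fa: "f a = a" unfolding f_def sa by simp
  have Ta: "T a = sqrt 2 - 1"
  proof -
    have "exp (-a) = 1 / (1 + sqrt 2)" unfolding a_eq using p2 by (simp add: exp_minus inverse_eq_divide)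
    also have "\<dots> = sqrt 2 - 1" using pr p2 by (simp add: divide_eq_eq)
    finally show ?thesis unfolding T_def sa by simp
  qed
  have "0 - F a = pi\<^sup>2 / 16 - (ln (1 + sqrt 2))\<^sup>2 / 2"
  proof -
    have "F a = a^2/4 - chi2 (sqrt 2 - 1)" by (simp add: F_def fa Ta)
    then show ?thesis unfolding chi2_landen a_eq by simp
  qed
  with res show ?thesis unfolding f_def a_def by simp
qed


end
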